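(* Let $\varepsilon=4\cdot(0.33)^3$. Then $$\varepsilon\, n^{-4}\cdot \max_{S\in\mathcal{S}_{2n}}F(S)\ \le\ \max_{\omega\in\mathbb{R}^{2n},\|\omega\|_2=1}\ \min_{\pi\in\Gamma_n}\sum_{i,j}\pi_{i,j}(M_{i,j}^{\top}\omega)^2\ \le\ \max_{S\in\mathcal{S}_{2n}}F(S).$$
   Context: Setting: $\mathcal{B}\subseteq\mathbb{R}^d$, $K$ a symmetric positive definite kernel on $\mathcal{B}$, points $x_1,\dots,x_n,y_1,\dots,y_n\in\mathcal{B}$. $G=\begin{pmatrix}K(x^n,x^n)&-K(x^n,y^n)\\-K(y^n,x^n)&K(y^n,y^n)\end{pmatrix}$ (with $K(x^n,y^n)=(K(x_i,y_j))_{i,j}$ etc.) is assumed positive definite, $G^{-1}=UU^{\top}$ is its Cholesky decomposition; $M'_{i,j}\in\mathbb{R}^{2n}$ has first $n$ entries $(K(x_i,x_l)-K(y_j,x_l))_{l\in[n]}$ and last $n$ entries $(K(y_j,y_l)-K(x_i,y_l))_{l\in[n]}$; $M_{i,j}=U^{\top}M'_{i,j}$. $\Gamma_n=\{\pi\in\mathbb{R}_+^{n\times n}:$ all row and column sums $1/n\}$, $\langle A,B\rangle=\mathrm{Trace}(A^{\top}B)$, $F(S)=\min_{\pi\in\Gamma_n}\sum_{i,j}\pi_{i,j}\langle M_{i,j}M_{i,j}^{\top},S\rangle$, $\mathcal{S}_{2n}=\{S\in\mathbb{S}^{2n}_+:\mathrm{Trace}(S)=1\}$. The middle quantity equals $\mathcal{KMS}_2(\widehat\mu_n,\widehat\nu_n)^2$,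 where $\widehat\mu_n=\frac1n\sum_i\delta_{x_i}$, $\widehat\nu_n=\frac1n\sum_i\delta_{y_i}$ and $\mathcal{KMS}_2(\mu,\nu)=\sup_{f\in\mathcal{H},\|f\|_{\mathcal{H}}\le1}W_2(f_{\#}\mu,f_{\#}\nu)$ with $\mathcal{H}$ the RKHS of $K$. *)

theory Defs
  imports "HOL-Analysis.Analysis"
begin

text \<open>Matrices of size m x m are represented as functions nat => nat => real,
  only the entries with indices < m being relevant; vectors of R^m as nat => real.\<close>

definition pd_kernel :: "('a \<Rightarrow> 'a \<Rightarrow> real) \<Rightarrow> 'a set \<Rightarrow> bool" where
  "pd_kernel K B \<longleftrightarrow>
     (\<forall>u\<in>B. \<forall>v\<in>B. K u v = K v u) \<and>
     (\<forall>m (z :: nat \<Rightarrow> 'a) (c :: nat \<Rightarrow> real). (\<forall>i<m. z i \<in> B) \<longrightarrow>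
        (\<Sum>i<m. \<Sum>j<m. c i * c j * K (z i) (z j)) \<ge> 0)"

definition pd_matrix :: "nat \<Rightarrow> (nat \<Rightarrow> nat \<Rightarrow> real) \<Rightarrow> bool" where
  "pd_matrix m A \<longleftrightarrow> (\<forall>i<m. \<forall>j<m. A i j = A j i) \<and>
     (\<forall>v. (\<exists>i<m. v i \<noteq> 0) \<longrightarrow> (\<Sum>i<m. \<Sum>j<m. v i * A i j * v j) > 0)"

definition psd_matrix :: "nat \<Rightarrow> (nat \<Rightarrow> nat \<Rightarrow> real) \<Rightarrow> bool" where
  "psd_matrix m A \<longleftrightarrow> (\<forall>i<m. \<forall>j<m. A i j = A j i) \<and>
     (\<forall>v. (\<Sum>i<m. \<Sum>j<m. v i * A i j * v j) \<ge> 0)"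

definition Gmat :: "('a \<Rightarrow> 'a \<Rightarrow> real) \<Rightarrow> nat \<Rightarrow> (nat \<Rightarrow> 'a) \<Rightarrow> (nat \<Rightarrow> 'a) \<Rightarrow> nat \<Rightarrow> nat \<Rightarrow> real" where
  "Gmat K n x y l m =
     (if l < n \<and> m < n then K (x l) (x m)
      else if l < n then - K (x l) (y (m - n))
      else if m < n then - K (y (l - n)) (x m)
      else K (y (l - n)) (y (m - n)))"

definition cholesky_of_inverse :: "nat \<Rightarrow> (nat \<Rightarrow> nat \<Rightarrow> real) \<Rightarrow> (nat \<Rightarrow> nat \<Rightarrow> real) \<Rightarrow> bool" where
  "cholesky_of_inverse m G U \<longleftrightarrow>
     (\<forall>i<m. \<forall>j<m. i < j \<longrightarrow> U i j = 0) \<and> (\<forall>i<m. U i i > 0) \<and>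
     (\<forall>i<m. \<forall>j<m. (\<Sum>k<m. G i k * (\<Sum>l<m. U k l * U j l)) = (if i = j then 1 else 0))"

definition Mprime :: "('a \<Rightarrow> 'a \<Rightarrow> real) \<Rightarrow> nat \<Rightarrow> (nat \<Rightarrow> 'a) \<Rightarrow> (nat \<Rightarrow> 'a) \<Rightarrow> nat \<Rightarrow> nat \<Rightarrow> nat \<Rightarrow> real" where
  "Mprime K n x y i j l =
     (if l < n then K (x i) (x l) - K (y j) (x l)
      else K (y j) (y (l - n)) - K (x i) (y (l - n)))"

definition Mvec :: "('a \<Rightarrow> 'a \<Rightarrow> real) \<Rightarrow> nat \<Rightarrow> (nat \<Rightarrow> 'a) \<Rightarrow> (nat \<Rightarrow> 'a) \<Rightarrow> (nat \<Rightarrow> nat \<Rightarrow> real) \<Rightarrow> nat \<Rightarrow> nat \<Rightarrow> nat \<Rightarrow> real" where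
  "Mvec K n x y U i j k = (\<Sum>l<2*n. U l k * Mprime K n x y i j l)"

definition Gamma :: "nat \<Rightarrow> (nat \<Rightarrow> nat \<Rightarrow> real) set" where
  "Gamma n = {\<pi>. (\<forall>i<n. \<forall>j<n. \<pi> i j \<ge> 0) \<and>
                  (\<forall>i<n. (\<Sum>j<n. \<pi> i j) = 1 / real n) \<and>
                  (\<forall>j<n. (\<Sum>i<n. \<pi> i j) = 1 / real n)}"

definition Sset :: "nat \<Rightarrow> (nat \<Rightarrow> nat \<Rightarrow> real) set" where
  "Sset m = {S. psd_matrix m S \<and> (\<Sum>k<m. S k k) = 1}"

definition Ffun :: "('a \<Rightarrow> 'a \<Rightarrow> real) \<Rightarrow> nat \<Rightarrow> (nat \<Rightarrow> 'a) \<Rightarrow> (nat \<Rightarrow> 'a) \<Rightarrow> (nat \<Rightarrow> nat \<Rightarrow> real) \<Rightarrow> (nat \<Rightarrow> nat \<Rightarrow> real) \<Rightarrow> real" where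
  "Ffun K n x y U S = (INF \<pi>\<in>Gamma n. \<Sum>i<n. \<Sum>j<n. \<pi> i j *
      (\<Sum>k<2*n. \<Sum>l<2*n. Mvec K n x y U i j k * Mvec K n x y U i j l * S k l))"

definition middle :: "('a \<Rightarrow> 'a \<Rightarrow> real) \<Rightarrow> nat \<Rightarrow> (nat \<Rightarrow> 'a) \<Rightarrow> (nat \<Rightarrow> 'a) \<Rightarrow> (nat \<Rightarrow> nat \<Rightarrow> real) \<Rightarrow> real" where
  "middle K n x y U = (SUP \<omega>\<in>{\<omega>. (\<Sum>k<2*n. (\<omega> k)\<^sup>2) = 1}.
      INF \<pi>\<in>Gamma n. \<Sum>i<n. \<Sum>j<n. \<pi> i j * (\<Sum>k<2*n. Mvec K n x y U i j k * \<omega> k)\<^sup>2)"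

end

theory Submission
  imports Defs
begin
lemma bang:
  fixes P :: "'p set" and V :: "'p \<Rightarrow> nat \<Rightarrow> real" and m :: nat
  assumes finP: "finite P" and m1: "m \<ge> 1"
  shows "\<exists>\<omega>. (\<Sum>k<m. (\<omega> k)\<^sup>2) = 1 \<and>
     (\<forall>p\<in>P. (\<Sum>k<m. (V p k)\<^sup>2) \<le> (real (card P))\<^sup>2 * (\<Sum>k<m. V p k * \<omega> k)\<^sup>2)"
proof -
  define nr where "nr p = sqrt (\<Sum>k<m. (V p k)\<^sup>2)" for p
  define u where "u p k = V p k / nr p" for p k
  define E where "E = PiE P (\<lambda>_. {-1::real,1})"
  define xx where "xx e k = (\<Sum>p\<in>P. e p * u p k)" for e k
  define Q where "Q e = (\<Sum>k<m. (xx e k)\<^sup>2)" for e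
  have finE: "finite E" unfolding E_def using finP by (intro finite_PiE) auto
  have neE: "(\<lambda>p\<in>P. 1) \<in> E" unfolding E_def by auto
  obtain e0 where e0E: "e0 \<in> E" and e0max: "\<forall>e\<in>E. Q e \<le> Q e0"
  proof -
    have "Max (Q ` E) \<in> Q ` E" using finE neE by (intro Max_in) auto
    then obtain e0 where "e0 \<in> E" "Q e0 = Max (Q ` E)" by auto
    moreover have "\<forall>e\<in>E. Q e \<le> Max (Q ` E)" using finE by auto
    ultimately show ?thesis using that by auto
  qed
  have nrsq: "(nr p)\<^sup>2 = (\<Sum>k<m. (V p k)\<^sup>2)" for p
    unfolding nr_def by (simp add: sum_nonneg)
  have usq: "(\<Sum>k<m. (u p k)\<^sup>2) = (if nr p = 0 then 0 else 1)" for p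
  proof (cases "nr p = 0")
    case True then show ?thesis by (simp add: u_def)
  next
    case False
    have "(\<Sum>k<m. (u p k)\<^sup>2) = (\<Sum>k<m. (V p k)\<^sup>2) / (nr p)\<^sup>2"
      by (simp add: u_def power_divide sum_divide_distrib)
    moreover have "(nr p)\<^sup>2 \<noteq> 0" using False by simp
    ultimately show ?thesis using False nrsq[of p] by simp
  qed
  have e0pm: "e0 p = -1 \<or> e0 p = 1" if "p \<in> P" for p
    using e0E that unfolding E_def by (auto simp: PiE_iff)
  have flip: "e0 p0 * (\<Sum>k<m. xx e0 k * u p0 k) \<ge> (\<Sum>k<m. (u p0 k)\<^sup>2)" if p0: "p0 \<in> P" for p0
  proof -
    define e1 where "e1 = e0(p0 := - e0 p0)"
    have "e1 \<in> E" using e0E p0 e0pm[OF p0] unfolding E_def e1_def by (auto simp: PiE_iff extensional_def)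
    then have le: "Q e1 \<le> Q e0" using e0max by auto
    have x1: "xx e1 k = xx e0 k - 2 * e0 p0 * u p0 k" for k
    proof -
      have "xx e1 k - xx e0 k = (\<Sum>p\<in>P. (e1 p - e0 p) * u p k)"
        unfolding xx_def by (simp add: sum_subtractf algebra_simps)
      also have "\<dots> = (\<Sum>p\<in>P. (if p = p0 then - 2 * e0 p0 * u p0 k else 0))"
        by (intro sum.cong) (auto simp: e1_def)
      also have "\<dots> = - 2 * e0 p0 * u p0 k" using finP p0 by simp
      finally show ?thesis by simp
    qed
    have sq: "(e0 p0)\<^sup>2 = 1" using e0pm[OF p0] by auto
    have "Q e1 = (\<Sum>k<m. (xx e0 k)\<^sup>2 - 4 * e0 p0 * (xx e0 k * u p0 k) + 4 * (e0 p0)\<^sup>2 * (u p0 k)\<^sup>2)"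
      unfolding Q_def x1 by (intro sum.cong) (auto simp: power2_eq_square algebra_simps)
    also have "\<dots> = Q e0 - 4 * e0 p0 * (\<Sum>k<m. xx e0 k * u p0 k) + 4 * (\<Sum>k<m. (u p0 k)\<^sup>2)"
      unfolding Q_def sq by (simp add: sum.distrib sum_subtractf sum_distrib_left)
    finally show ?thesis using le by simp
  qed
  have key: "(\<Sum>k<m. (V p k)\<^sup>2) \<le> (\<Sum>k<m. V p k * xx e0 k)\<^sup>2" if p: "p \<in> P" for p
  proof (cases "nr p = 0")
    case True then show ?thesis using nrsq[of p] by simp
  next
    case False
    have ip: "e0 p * (\<Sum>k<m. xx e0 k * u p k) \<ge> 1" using flip[OF p] usq[of p] False by simp
    have "1 \<le> (\<Sum>k<m. xx e0 k * u p k)\<^sup>2"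
    proof -
      have "(e0 p * (\<Sum>k<m. xx e0 k * u p k))\<^sup>2 \<ge> 1" using ip
        by (metis one_le_power)
      then show ?thesis using e0pm[OF p] by (auto simp: power_mult_distrib)
    qed
    moreover have "(\<Sum>k<m. V p k * xx e0 k) = nr p * (\<Sum>k<m. xx e0 k * u p k)"
      unfolding u_def using False by (simp add: sum_distrib_left algebra_simps)
    ultimately have "(\<Sum>k<m. V p k * xx e0 k)\<^sup>2 \<ge> (nr p)\<^sup>2"
      by (simp add: power_mult_distrib) (metis mult.right_neutral mult_left_mono zero_le_power2)
    then show ?thesis using nrsq[of p] by simp
  qed
  have Qbound: "Q e0 \<le> (real (card P))\<^sup>2"
  proof -
    have "Q e0 \<le> (\<Sum>k<m. (\<Sum>p\<in>P. (e0 p * u p k)\<^sup>2) * card P)"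
      unfolding Q_def xx_def by (intro sum_mono sum_squared_le_sum_of_squares)
    also have "\<dots> = (\<Sum>k<m. (\<Sum>p\<in>P. (u p k)\<^sup>2)) * card P"
    proof -
      have "(e0 p * u p k)\<^sup>2 = (u p k)\<^sup>2" if "p \<in> P" for p k
        using e0pm[OF that] by (auto simp: power_mult_distrib)
      then show ?thesis by (simp add: sum_distrib_right cong: sum.cong)
    qed
    also have "\<dots> = (\<Sum>p\<in>P. (\<Sum>k<m. (u p k)\<^sup>2)) * card P"
      by (simp add: sum.swap[of _ "{..<m}"])
    also have "\<dots> \<le> (\<Sum>p\<in>P. 1::real) * card P"
      by (intro mult_right_mono sum_mono) (auto simp: usq)
    finally show ?thesis by (simp add: power2_eq_square)
  qed
  have Qnn: "Q e0 \<ge> 0" unfolding Q_def by (simp add: sum_nonneg)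
  show ?thesis
  proof (cases "Q e0 = 0")
    case True
    have "xx e0 k = 0" if "k < m" for k
      using True that unfolding Q_def by (simp add: sum_nonneg_eq_0_iff)
    then have "(\<Sum>k<m. V p k * xx e0 k) = 0" for p by simp
    then have "(\<Sum>k<m. (V p k)\<^sup>2) \<le> 0" if "p \<in> P" for p using key[OF that] by simp
    moreover have "(\<Sum>k<m. ((\<lambda>k. if k = 0 then 1 else 0::real) k)\<^sup>2) = 1"
    proof -
      have "(\<Sum>k<m. ((\<lambda>k. if k = 0 then 1 else 0::real) k)\<^sup>2) = (\<Sum>k<m. if k = 0 then 1 else 0)"
        by (intro sum.cong) auto
      also have "\<dots> = 1" using m1 by (simp add: sum.delta)
      finally show ?thesis .
    qed
    ultimately show ?thesis
      by (intro exI[of _ "\<lambda>k. if k = 0 then 1 else 0"]) (auto intro: order_trans[OF _ zero_le_mult_iff[THEN iffD2]])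
  next
    case False
    then have Qp: "Q e0 > 0" using Qnn by simp
    define \<omega> where "\<omega> k = xx e0 k / sqrt (Q e0)" for k
    have "(\<Sum>k<m. (\<omega> k)\<^sup>2) = Q e0 / Q e0"
      unfolding \<omega>_def Q_def by (simp add: power_divide sum_divide_distrib[symmetric] sum_nonneg)
    then have n1: "(\<Sum>k<m. (\<omega> k)\<^sup>2) = 1" using Qp by simp
    have "(\<Sum>k<m. (V p k)\<^sup>2) \<le> (real (card P))\<^sup>2 * (\<Sum>k<m. V p k * \<omega> k)\<^sup>2" if p: "p \<in> P" for p
    proof -
      have e: "(\<Sum>k<m. V p k * \<omega> k)\<^sup>2 = (\<Sum>k<m. V p k * xx e0 k)\<^sup>2 / Q e0"
        unfolding \<omega>_def using Qp by (simp add: sum_divide_distrib[symmetric] power_divide)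
      have "(\<Sum>k<m. (V p k)\<^sup>2) \<le> (\<Sum>k<m. V p k * xx e0 k)\<^sup>2" using key[OF p] .
      also have "\<dots> \<le> (real (card P))\<^sup>2 / Q e0 * (\<Sum>k<m. V p k * xx e0 k)\<^sup>2"
      proof -
        have "1 \<le> (real (card P))\<^sup>2 / Q e0" using Qbound Qp by simp
        then show ?thesis by (metis mult_1 mult_right_mono zero_le_power2)
      qed
      finally show ?thesis unfolding e by simp
    qed
    then show ?thesis using n1 by blast
  qed
qed

lemma delta2:
  fixes m :: nat
  assumes "l < m" "j < m"
  shows "(\<Sum>a<m. ((if a = l then c else 0) - (if a = j then d else 0)) * (f a::real)) = c * f l - d * f j"
proof -
  have e: "((if a = l then c else 0) - (if a = j then d else 0)) * (f a::real) =
    (if a = l then c * f a else 0) - (if a = j then d * f a else 0)" for a by (simp add: left_diff_distrib)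
  have s1: "(\<Sum>a<m. if a = l then c * f a else 0) = c * f l"
    using assms(1) by (subst sum.delta) auto
  have s2: "(\<Sum>a<m. if a = j then d * f a else 0) = d * f j"
    using assms(2) by (subst sum.delta) auto
  show ?thesis unfolding e sum_subtractf s1 s2 ..
qed

lemma psd_trace:
  assumes "psd_matrix m S"
  shows "(\<Sum>k<m. \<Sum>l<m. v k * v l * S k l) \<le> (\<Sum>k<m. S k k) * (\<Sum>k<m. (v k)\<^sup>2)"
proof -
  have sym: "S a b = S b a" if "a < m" "b < m" for a b using assms that unfolding psd_matrix_def by auto
  have form: "0 \<le> (v j)\<^sup>2 * S l l + (v l)\<^sup>2 * S j j - 2 * (v j * v l * S j l)" if jl: "j < m" "l < m" for j l
  proof -
    define w where "w a = (if a = l then v j else 0) - (if a = j then v l else 0)" for a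
    have "0 \<le> (\<Sum>a<m. \<Sum>b<m. w a * S a b * w b)" using assms unfolding psd_matrix_def by auto
    also have "(\<Sum>a<m. \<Sum>b<m. w a * S a b * w b) = (\<Sum>a<m. w a * (\<Sum>b<m. w b * S a b))"
      by (simp add: sum_distrib_left mult_ac)
    also have "\<dots> = (\<Sum>a<m. w a * (v j * S a l - v l * S a j))"
      unfolding w_def using jl by (subst delta2) auto
    also have "\<dots> = v j * (v j * S l l - v l * S l j) - v l * (v j * S j l - v l * S j j)"
      unfolding w_def using jl by (subst delta2) auto
    also have "\<dots> = (v j)\<^sup>2 * S l l + (v l)\<^sup>2 * S j j - 2 * (v j * v l * S j l)"
      using sym[OF jl(2) jl(1)] by (simp add: power2_eq_square algebra_simps)
    finally show ?thesis .
  qed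
  have "0 \<le> (\<Sum>j<m. \<Sum>l<m. (v j)\<^sup>2 * S l l + (v l)\<^sup>2 * S j j - 2 * (v j * v l * S j l))"
    using form by (intro sum_nonneg) auto
  also have "\<dots> = 2 * ((\<Sum>k<m. S k k) * (\<Sum>k<m. (v k)\<^sup>2)) - 2 * (\<Sum>k<m. \<Sum>l<m. v k * v l * S k l)"
  proof -
    have a1: "(\<Sum>j<m. \<Sum>l<m. (v j)\<^sup>2 * S l l) = (\<Sum>k<m. (v k)\<^sup>2) * (\<Sum>k<m. S k k)"
      by (simp add: sum_distrib_left sum_distrib_right, rule sum.swap)
    have a2: "(\<Sum>j<m. \<Sum>l<m. (v l)\<^sup>2 * S j j) = (\<Sum>k<m. S k k) * (\<Sum>k<m. (v k)\<^sup>2)"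
      by (simp add: sum_distrib_left sum_distrib_right mult.commute, rule sum.swap)
    have "(\<Sum>j<m. \<Sum>l<m. (v j)\<^sup>2 * S l l + (v l)\<^sup>2 * S j j - 2 * (v j * v l * S j l)) =
      (\<Sum>j<m. \<Sum>l<m. (v j)\<^sup>2 * S l l) + (\<Sum>j<m. \<Sum>l<m. (v l)\<^sup>2 * S j j) - 2 * (\<Sum>k<m. \<Sum>l<m. v k * v l * S k l)"
      by (simp only: sum.distrib sum_subtractf sum_distrib_left)
    then show ?thesis unfolding a1 a2 by simp
  qed
  finally show ?thesis by simp
qed

lemma powi4: "(r::real) powi (-4) = 1 / r ^ 4"
  by (simp add: power_int_minus divide_inverse)

theorem theorem4p7:
  fixes B :: "(real ^ 'd) set" and K :: "real ^ 'd \<Rightarrow> real ^ 'd \<Rightarrow> real"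
    and n :: nat and x y :: "nat \<Rightarrow> real ^ 'd" and U :: "nat \<Rightarrow> nat \<Rightarrow> real"
    and \<epsilon> :: real
  assumes "n \<ge> 1"
    and "pd_kernel K B"
    and "\<forall>i<n. x i \<in> B" and "\<forall>i<n. y i \<in> B"
    and "pd_matrix (2*n) (Gmat K n x y)"
    and "cholesky_of_inverse (2*n) (Gmat K n x y) U"
    and "\<epsilon> = 4 * (33/100)^3"
  shows "\<epsilon> * real n powi (-4) * (SUP S\<in>Sset (2*n). Ffun K n x y U S) \<le> middle K n x y U
       \<and> middle K n x y U \<le> (SUP S\<in>Sset (2*n). Ffun K n x y U S)"
proof -
  note n1 = assms(1)
  define m where "m = 2 * n"
  have m1: "m \<ge> 1" using n1 unfolding m_def by simp
  define M where "M i j k = Mvec K n x y U i j k" for i j k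
  define qS where "qS S i j = (\<Sum>k<m. \<Sum>l<m. M i j k * M i j l * S k l)" for S i j
  define Fv where "Fv S \<pi> = (\<Sum>i<n. \<Sum>j<n. \<pi> i j * qS S i j)" for S and \<pi> :: "nat \<Rightarrow> nat \<Rightarrow> real"
  define Mv where "Mv \<omega> \<pi> = (\<Sum>i<n. \<Sum>j<n. \<pi> i j * (\<Sum>k<m. M i j k * \<omega> k)\<^sup>2)"
    for \<omega> and \<pi> :: "nat \<Rightarrow> nat \<Rightarrow> real"
  define nsq where "nsq i j = (\<Sum>k<m. (M i j k)\<^sup>2)" for i j
  define W where "W = {\<omega>. (\<Sum>k<m. (\<omega> k)\<^sup>2) = (1::real)}"
  define Fs where "Fs S = (INF \<pi>\<in>Gamma n. Fv S \<pi>)" for S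
  define Is where "Is \<omega> = (INF \<pi>\<in>Gamma n. Mv \<omega> \<pi>)" for \<omega>
  have Ffun_eq: "Ffun K n x y U S = Fs S" for S
    unfolding Ffun_def Fs_def Fv_def qS_def M_def m_def ..
  have mid_eq: "middle K n x y U = (SUP \<omega>\<in>W. Is \<omega>)"
    unfolding middle_def Is_def Mv_def W_def M_def m_def ..
  define \<pi>0 where "\<pi>0 = (\<lambda>(i::nat) (j::nat). 1 / (real n)\<^sup>2)"
  have np: "real n > 0" using n1 by simp
  have G0: "\<pi>0 \<in> Gamma n"
    unfolding Gamma_def \<pi>0_def using np by (auto simp: power2_eq_square)
  have Gne: "Gamma n \<noteq> {}" using G0 by auto
  have pinn: "\<pi> i j \<ge> 0" if "\<pi> \<in> Gamma n" "i < n" "j < n" for \<pi> i j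
    using that unfolding Gamma_def by auto
  have qnn: "qS S i j \<ge> 0" if "S \<in> Sset m" for S i j
  proof -
    have "psd_matrix m S" using that unfolding Sset_def by auto
    then have "0 \<le> (\<Sum>k<m. \<Sum>l<m. M i j k * S k l * M i j l)" unfolding psd_matrix_def by auto
    then show ?thesis unfolding qS_def by (simp add: mult_ac)
  qed
  have qle: "qS S i j \<le> nsq i j" if "S \<in> Sset m" for S i j
    using psd_trace[of m S "M i j"] that unfolding Sset_def qS_def nsq_def by auto
  have Fvnn: "Fv S \<pi> \<ge> 0" if "S \<in> Sset m" "\<pi> \<in> Gamma n" for S \<pi>
    unfolding Fv_def using qnn[OF that(1)] pinn[OF that(2)] by (intro sum_nonneg mult_nonneg_nonneg) auto
  have bddFv: "bdd_below (Fv S ` Gamma n)" if "S \<in> Sset m" for S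
    using Fvnn[OF that] by (intro bdd_belowI[of _ 0]) auto
  define C where "C = (\<Sum>i<n. \<Sum>j<n. \<pi>0 i j * nsq i j)"
  have Fsle: "Fs S \<le> C" if "S \<in> Sset m" for S
  proof -
    have "Fs S \<le> Fv S \<pi>0" unfolding Fs_def using bddFv[OF that] G0 by (rule cINF_lower)
    also have "\<dots> \<le> C" unfolding Fv_def C_def using qle[OF that] pinn[OF G0]
      by (intro sum_mono mult_left_mono) auto
    finally show ?thesis .
  qed
  have Fsnn: "Fs S \<ge> 0" if "S \<in> Sset m" for S
    unfolding Fs_def using Gne Fvnn[OF that] by (intro cINF_greatest) auto
  have bddFs: "bdd_above (Fs ` Sset m)" using Fsle by (intro bdd_aboveI[of _ C]) auto
  have rank1: "(\<lambda>k l. \<omega> k * \<omega> l) \<in> Sset m \<and> Fs (\<lambda>k l. \<omega> k * \<omega> l) = Is \<omega>" if "\<omega> \<in> W" for \<omega>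
  proof -
    have sq: "(\<Sum>k<m. \<Sum>l<m. v k * (\<omega> k * \<omega> l) * v l) = (\<Sum>k<m. v k * \<omega> k)\<^sup>2" for v
      by (simp add: power2_eq_square sum_distrib_left sum_distrib_right mult_ac)
    have "psd_matrix m (\<lambda>k l. \<omega> k * \<omega> l)" unfolding psd_matrix_def sq by auto
    moreover have "(\<Sum>k<m. \<omega> k * \<omega> k) = 1" using that unfolding W_def by (simp add: power2_eq_square)
    ultimately have "(\<lambda>k l. \<omega> k * \<omega> l) \<in> Sset m" unfolding Sset_def by auto
    moreover have "qS (\<lambda>k l. \<omega> k * \<omega> l) i j = (\<Sum>k<m. M i j k * \<omega> k)\<^sup>2" for i j
      unfolding qS_def by (simp add: power2_eq_square sum_distrib_left sum_distrib_right mult_ac)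
    then have "Fv (\<lambda>k l. \<omega> k * \<omega> l) = Mv \<omega>" unfolding Fv_def Mv_def by auto
    ultimately show ?thesis unfolding Fs_def Is_def by auto
  qed
  obtain \<omega>0 where w0: "\<omega>0 \<in> W" using bang[of "{}" m] m1 unfolding W_def by auto
  have Sne: "Sset m \<noteq> {}" using rank1[OF w0] by auto
  have SUPnn: "(SUP S\<in>Sset m. Fs S) \<ge> 0"
    using Sne bddFs Fsnn by (meson all_not_in_conv cSUP_upper2)
  have upper: "Is \<omega> \<le> (SUP S\<in>Sset m. Fs S)" if "\<omega> \<in> W" for \<omega>
    using rank1[OF that] bddFs by (metis cSUP_upper)
  have bddI: "bdd_above (Is ` W)" using upper by (intro bdd_aboveI) auto
  have part2: "(SUP \<omega>\<in>W. Is \<omega>) \<le> (SUP S\<in>Sset m. Fs S)"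
    using w0 upper by (intro cSUP_least) auto
  define P where "P = {..<n} \<times> {..<n}"
  obtain \<omega> where wW: "\<omega> \<in> W" and wkey: "\<forall>p\<in>P. (\<Sum>k<m. ((\<lambda>p. M (fst p) (snd p)) p k)\<^sup>2)
      \<le> (real (card P))\<^sup>2 * (\<Sum>k<m. (\<lambda>p. M (fst p) (snd p)) p k * \<omega> k)\<^sup>2"
    using bang[of P m "\<lambda>p. M (fst p) (snd p)"] m1 unfolding P_def W_def by auto
  have cP: "(real (card P))\<^sup>2 = (real n)^4" unfolding P_def by (simp add: power2_eq_square eval_nat_numeral)
  have wk: "nsq i j \<le> (real n)^4 * (\<Sum>k<m. M i j k * \<omega> k)\<^sup>2" if "i < n" "j < n" for i j
    using wkey cP that unfolding nsq_def P_def by auto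
  have n4: "(real n)^4 > 0" using np by simp
  have low: "Fs S \<le> (real n)^4 * Is \<omega>" if S: "S \<in> Sset m" for S
  proof -
    have "Fs S / (real n)^4 \<le> Is \<omega>" unfolding Is_def
    proof (rule cINF_greatest[OF Gne])
      fix \<pi> assume \<pi>: "\<pi> \<in> Gamma n"
      have "Fs S \<le> Fv S \<pi>" unfolding Fs_def using bddFv[OF S] \<pi> by (rule cINF_lower)
      also have "\<dots> \<le> (\<Sum>i<n. \<Sum>j<n. \<pi> i j * ((real n)^4 * (\<Sum>k<m. M i j k * \<omega> k)\<^sup>2))"
        unfolding Fv_def using qle[OF S] wk pinn[OF \<pi>]
        by (intro sum_mono mult_left_mono) (auto intro: order_trans[OF qle[OF S] wk])
      also have "\<dots> = (real n)^4 * Mv \<omega> \<pi>" unfolding Mv_def by (simp add: sum_distrib_left mult_ac)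
      finally show "Fs S / (real n)^4 \<le> Mv \<omega> \<pi>" using n4 by (simp add: divide_le_eq mult.commute)
    qed
    then show ?thesis using n4 by (simp add: divide_le_eq mult.commute)
  qed
  have "Is \<omega> \<le> (SUP \<omega>\<in>W. Is \<omega>)" using bddI wW by (rule cSUP_upper2) simp
  then have "Fs S \<le> (real n)^4 * (SUP \<omega>\<in>W. Is \<omega>)" if "S \<in> Sset m" for S
    using low[OF that] n4 by (meson mult_left_mono less_imp_le order_trans)
  then have "(SUP S\<in>Sset m. Fs S) \<le> (real n)^4 * (SUP \<omega>\<in>W. Is \<omega>)"
    using Sne by (intro cSUP_least) auto
  then have part1': "(SUP S\<in>Sset m. Fs S) / (real n)^4 \<le> (SUP \<omega>\<in>W. Is \<omega>)"
    using n4 by (simp add: divide_le_eq mult.commute)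
  have eps: "\<epsilon> \<le> 1" using assms(7) by (simp add: eval_nat_numeral)
  have "\<epsilon> * real n powi (-4) * (SUP S\<in>Sset m. Fs S) \<le> 1 * ((SUP S\<in>Sset m. Fs S) / (real n)^4)"
  proof -
    have "\<epsilon> * (SUP S\<in>Sset m. Fs S) \<le> 1 * (SUP S\<in>Sset m. Fs S)"
      using eps SUPnn by (rule mult_right_mono)
    then show ?thesis unfolding powi4 using n4 by (simp add: divide_right_mono)
  qed
  also have "\<dots> \<le> (SUP \<omega>\<in>W. Is \<omega>)" using part1' by simp
  finally have part1: "\<epsilon> * real n powi (-4) * (SUP S\<in>Sset m. Fs S) \<le> (SUP \<omega>\<in>W. Is \<omega>)" .
  show ?thesis unfolding Ffun_eq mid_eq m_def[symmetric] using part1 part2 by auto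
qed

end
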